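(* Let $(\mathcal C,\mathbb E,\mathfrak s)$ be an $n$-exangulated category. If $\mathcal C$ is weakly idempotent complete, then $\mathbb E\text{-}\mathrm{Ext}(\mathcal C)$ is also weakly idempotent complete.
   Context: $n\ge1$; $n$-exangulated categories in the sense of Herschend–Liu–Nakaoka ($\mathcal C$ additive, $\mathbb E\colon\mathcal C^{\mathrm{op}}\times\mathcal C\to\mathsf{Ab}$ biadditive, $\mathfrak s$ an exact realisation, axioms (EA1), (EA2), (EA2$^{\mathrm{op}}$)). An additive category is weakly idempotent complete if every retraction has a kernel (equivalently, every section has a cokernel). Write $a_*\alpha=\mathbb E(C,a)(\alpha)$, $c^*\beta=\mathbb E(c,A)(\beta)$. The category $\mathbb E\text{-}\mathrm{Ext}(\mathcal C)$ has objects all $\alpha\in\mathbb E(C,A)$; morphisms $\alpha\to\beta\in\mathbb E(D,B)$ are pairs $(a\colon A\to B,c\colon C\to D)$ with $a_*\alpha=c^*\beta$; composition and addition componentwise. *)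

theory Defs
  imports Main
begin

record ('o,'m) acat =
  Ob  :: "'o set"
  Ar  :: "'m set"
  dm  :: "'m \<Rightarrow> 'o"
  cd  :: "'m \<Rightarrow> 'o"
  cp  :: "'m \<Rightarrow> 'm \<Rightarrow> 'm"   (* cp K g f = g \<circ> f *)
  idn :: "'o \<Rightarrow> 'm"
  zr  :: "'o \<Rightarrow> 'o \<Rightarrow> 'm"
  ad  :: "'m \<Rightarrow> 'm \<Rightarrow> 'm"
  ng  :: "'m \<Rightarrow> 'm"

definition hom :: "('o,'m,'x) acat_scheme \<Rightarrow> 'o \<Rightarrow> 'o \<Rightarrow> 'm set" where
  "hom K A B = {f \<in> Ar K. dm K f = A \<and> cd K f = B}"

definition category :: "('o,'m,'x) acat_scheme \<Rightarrow> bool" where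
  "category K \<longleftrightarrow>
    (\<forall>f\<in>Ar K. dm K f \<in> Ob K \<and> cd K f \<in> Ob K) \<and>
    (\<forall>A\<in>Ob K. idn K A \<in> hom K A A) \<and>
    (\<forall>f\<in>Ar K. \<forall>g\<in>Ar K. cd K f = dm K g \<longrightarrow> cp K g f \<in> hom K (dm K f) (cd K g)) \<and>
    (\<forall>f\<in>Ar K. cp K f (idn K (dm K f)) = f \<and> cp K (idn K (cd K f)) f = f) \<and>
    (\<forall>f\<in>Ar K. \<forall>g\<in>Ar K. \<forall>h\<in>Ar K. cd K f = dm K g \<and> cd K g = dm K h \<longrightarrow>
        cp K h (cp K g f) = cp K (cp K h g) f)"

definition preadditive :: "('o,'m,'x) acat_scheme \<Rightarrow> bool" where
  "preadditive K \<longleftrightarrow> category K \<and>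
    (\<forall>A\<in>Ob K. \<forall>B\<in>Ob K. zr K A B \<in> hom K A B \<and>
       (\<forall>f\<in>hom K A B. \<forall>g\<in>hom K A B. ad K f g \<in> hom K A B \<and> ad K f g = ad K g f) \<and>
       (\<forall>f\<in>hom K A B. \<forall>g\<in>hom K A B. \<forall>h\<in>hom K A B. ad K (ad K f g) h = ad K f (ad K g h)) \<and>
       (\<forall>f\<in>hom K A B. ad K f (zr K A B) = f \<and> ng K f \<in> hom K A B \<and> ad K f (ng K f) = zr K A B)) \<and>
    (\<forall>f\<in>Ar K. \<forall>g\<in>Ar K. \<forall>h\<in>Ar K. dm K f = dm K g \<and> cd K f = cd K g \<and> cd K f = dm K h \<longrightarrow>
        cp K h (ad K f g) = ad K (cp K h f) (cp K h g)) \<and>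
    (\<forall>f\<in>Ar K. \<forall>g\<in>Ar K. \<forall>h\<in>Ar K. dm K f = dm K g \<and> cd K f = cd K g \<and> cd K h = dm K f \<longrightarrow>
        cp K (ad K f g) h = ad K (cp K f h) (cp K g h))"

definition is_zero_object :: "('o,'m,'x) acat_scheme \<Rightarrow> 'o \<Rightarrow> bool" where
  "is_zero_object K Z \<longleftrightarrow> Z \<in> Ob K \<and>
    (\<forall>A\<in>Ob K. hom K Z A = {zr K Z A} \<and> hom K A Z = {zr K A Z})"

definition is_biproduct :: "('o,'m,'x) acat_scheme \<Rightarrow> 'o \<Rightarrow> 'o \<Rightarrow> 'o \<Rightarrow> 'm \<Rightarrow> 'm \<Rightarrow> 'm \<Rightarrow> 'm \<Rightarrow> bool" where
  "is_biproduct K A B P i1 i2 p1 p2 \<longleftrightarrow> P \<in> Ob K \<and>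
    i1 \<in> hom K A P \<and> i2 \<in> hom K B P \<and> p1 \<in> hom K P A \<and> p2 \<in> hom K P B \<and>
    cp K p1 i1 = idn K A \<and> cp K p2 i2 = idn K B \<and>
    cp K p1 i2 = zr K B A \<and> cp K p2 i1 = zr K A B \<and>
    ad K (cp K i1 p1) (cp K i2 p2) = idn K P"

definition additive :: "('o,'m,'x) acat_scheme \<Rightarrow> bool" where
  "additive K \<longleftrightarrow> preadditive K \<and> (\<exists>Z. is_zero_object K Z) \<and>
    (\<forall>A\<in>Ob K. \<forall>B\<in>Ob K. \<exists>P i1 i2 p1 p2. is_biproduct K A B P i1 i2 p1 p2)"

definition is_kernel :: "('o,'m,'x) acat_scheme \<Rightarrow> 'm \<Rightarrow> 'm \<Rightarrow> bool" where
  "is_kernel K r k \<longleftrightarrow> k \<in> Ar K \<and> cd K k = dm K r \<and> cp K r k = zr K (dm K k) (cd K r) \<and>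
    (\<forall>t\<in>Ar K. cd K t = dm K r \<and> cp K r t = zr K (dm K t) (cd K r) \<longrightarrow>
       (\<exists>!u. u \<in> hom K (dm K t) (dm K k) \<and> cp K k u = t))"

definition is_retraction :: "('o,'m,'x) acat_scheme \<Rightarrow> 'm \<Rightarrow> bool" where
  "is_retraction K r \<longleftrightarrow> r \<in> Ar K \<and>
    (\<exists>s\<in>hom K (cd K r) (dm K r). cp K r s = idn K (cd K r))"

definition weakly_idempotent_complete :: "('o,'m,'x) acat_scheme \<Rightarrow> bool" where
  "weakly_idempotent_complete K \<longleftrightarrow> (\<forall>r. is_retraction K r \<longrightarrow> (\<exists>k. is_kernel K r k))"

section \<open>Biadditive functors E : C^op \<times> C \<rightarrow> Ab\<close>

record ('o,'m,'e) bifun =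
  Ex    :: "'o \<Rightarrow> 'o \<Rightarrow> 'e set"                (* Ex E C A = E(C,A) *)
  eadd  :: "'o \<Rightarrow> 'o \<Rightarrow> 'e \<Rightarrow> 'e \<Rightarrow> 'e"
  ezero :: "'o \<Rightarrow> 'o \<Rightarrow> 'e"
  eneg  :: "'o \<Rightarrow> 'o \<Rightarrow> 'e \<Rightarrow> 'e"
  cov   :: "'o \<Rightarrow> 'm \<Rightarrow> 'e \<Rightarrow> 'e"            (* cov E C a = E(C,a) = a_* *)
  ctr   :: "'m \<Rightarrow> 'o \<Rightarrow> 'e \<Rightarrow> 'e"            (* ctr E c A = E(c,A) = c^* *)

definition ab_group_on :: "'e set \<Rightarrow> ('e \<Rightarrow> 'e \<Rightarrow> 'e) \<Rightarrow> 'e \<Rightarrow> ('e \<Rightarrow> 'e) \<Rightarrow> bool" where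
  "ab_group_on S pl z mi \<longleftrightarrow> z \<in> S \<and>
    (\<forall>x\<in>S. \<forall>y\<in>S. pl x y \<in> S \<and> pl x y = pl y x) \<and>
    (\<forall>x\<in>S. \<forall>y\<in>S. \<forall>w\<in>S. pl (pl x y) w = pl x (pl y w)) \<and>
    (\<forall>x\<in>S. pl x z = x \<and> mi x \<in> S \<and> pl x (mi x) = z)"

definition biadditive_functor :: "('o,'m,'x) acat_scheme \<Rightarrow> ('o,'m,'e) bifun \<Rightarrow> bool" where
  "biadditive_functor K E \<longleftrightarrow>
    (\<forall>C\<in>Ob K. \<forall>A\<in>Ob K. ab_group_on (Ex E C A) (eadd E C A) (ezero E C A) (eneg E C A)) \<and>
    \<comment> \<open>covariant part E(C,-)\<close>
    (\<forall>C\<in>Ob K. \<forall>a\<in>Ar K. \<forall>\<alpha>\<in>Ex E C (dm K a). cov E C a \<alpha> \<in> Ex E C (cd K a)) \<and>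
    (\<forall>C\<in>Ob K. \<forall>a\<in>Ar K. \<forall>\<alpha>\<in>Ex E C (dm K a). \<forall>\<beta>\<in>Ex E C (dm K a).
        cov E C a (eadd E C (dm K a) \<alpha> \<beta>) = eadd E C (cd K a) (cov E C a \<alpha>) (cov E C a \<beta>)) \<and>
    (\<forall>C\<in>Ob K. \<forall>A\<in>Ob K. \<forall>\<alpha>\<in>Ex E C A. cov E C (idn K A) \<alpha> = \<alpha>) \<and>
    (\<forall>C\<in>Ob K. \<forall>a\<in>Ar K. \<forall>b\<in>Ar K. cd K a = dm K b \<longrightarrow>
        (\<forall>\<alpha>\<in>Ex E C (dm K a). cov E C (cp K b a) \<alpha> = cov E C b (cov E C a \<alpha>))) \<and>
    (\<forall>C\<in>Ob K. \<forall>a\<in>Ar K. \<forall>a'\<in>Ar K. dm K a = dm K a' \<and> cd K a = cd K a' \<longrightarrow>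
        (\<forall>\<alpha>\<in>Ex E C (dm K a). cov E C (ad K a a') \<alpha> = eadd E C (cd K a) (cov E C a \<alpha>) (cov E C a' \<alpha>))) \<and>
    \<comment> \<open>contravariant part E(-,A)\<close>
    (\<forall>A\<in>Ob K. \<forall>c\<in>Ar K. \<forall>\<alpha>\<in>Ex E (cd K c) A. ctr E c A \<alpha> \<in> Ex E (dm K c) A) \<and>
    (\<forall>A\<in>Ob K. \<forall>c\<in>Ar K. \<forall>\<alpha>\<in>Ex E (cd K c) A. \<forall>\<beta>\<in>Ex E (cd K c) A.
        ctr E c A (eadd E (cd K c) A \<alpha> \<beta>) = eadd E (dm K c) A (ctr E c A \<alpha>) (ctr E c A \<beta>)) \<and>
    (\<forall>C\<in>Ob K. \<forall>A\<in>Ob K. \<forall>\<alpha>\<in>Ex E C A. ctr E (idn K C) A \<alpha> = \<alpha>) \<and>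
    (\<forall>A\<in>Ob K. \<forall>c\<in>Ar K. \<forall>c'\<in>Ar K. cd K c' = dm K c \<longrightarrow>
        (\<forall>\<alpha>\<in>Ex E (cd K c) A. ctr E (cp K c c') A \<alpha> = ctr E c' A (ctr E c A \<alpha>))) \<and>
    (\<forall>A\<in>Ob K. \<forall>c\<in>Ar K. \<forall>c'\<in>Ar K. dm K c = dm K c' \<and> cd K c = cd K c' \<longrightarrow>
        (\<forall>\<alpha>\<in>Ex E (cd K c) A. ctr E (ad K c c') A \<alpha> = eadd E (dm K c) A (ctr E c A \<alpha>) (ctr E c' A \<alpha>))) \<and>
    \<comment> \<open>bifunctoriality\<close>
    (\<forall>a\<in>Ar K. \<forall>c\<in>Ar K. \<forall>\<alpha>\<in>Ex E (cd K c) (dm K a).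
        ctr E c (cd K a) (cov E (cd K c) a \<alpha>) = cov E (dm K c) a (ctr E c (dm K a) \<alpha>))"

section \<open>Complexes X^0 \<rightarrow> X^1 \<rightarrow> ... \<rightarrow> X^{n+1}, given by their differentials d 0, ..., d n\<close>

definition cobj :: "('o,'m,'x) acat_scheme \<Rightarrow> nat \<Rightarrow> (nat \<Rightarrow> 'm) \<Rightarrow> nat \<Rightarrow> 'o" where
  "cobj K n d i = (if i \<le> n then dm K (d i) else cd K (d n))"

definition is_complex :: "('o,'m,'x) acat_scheme \<Rightarrow> nat \<Rightarrow> (nat \<Rightarrow> 'm) \<Rightarrow> bool" where
  "is_complex K n d \<longleftrightarrow> (\<forall>i\<le>n. d i \<in> Ar K) \<and>
    (\<forall>i<n. cd K (d i) = dm K (d (Suc i)) \<and> cp K (d (Suc i)) (d i) = zr K (dm K (d i)) (cd K (d (Suc i))))"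

definition chain_map :: "('o,'m,'x) acat_scheme \<Rightarrow> nat \<Rightarrow> (nat \<Rightarrow> 'm) \<Rightarrow> (nat \<Rightarrow> 'm) \<Rightarrow> (nat \<Rightarrow> 'm) \<Rightarrow> bool" where
  "chain_map K n dX dY f \<longleftrightarrow>
    (\<forall>i\<le>Suc n. f i \<in> hom K (cobj K n dX i) (cobj K n dY i)) \<and>
    (\<forall>i\<le>n. cp K (dY i) (f i) = cp K (f (Suc i)) (dX i))"

definition homotopic :: "('o,'m,'x) acat_scheme \<Rightarrow> nat \<Rightarrow> (nat \<Rightarrow> 'm) \<Rightarrow> (nat \<Rightarrow> 'm) \<Rightarrow> (nat \<Rightarrow> 'm) \<Rightarrow> (nat \<Rightarrow> 'm) \<Rightarrow> bool" where
  "homotopic K n dX dY f g \<longleftrightarrow> (\<exists>h.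
    (\<forall>i. 1 \<le> i \<and> i \<le> Suc n \<longrightarrow> h i \<in> hom K (cobj K n dX i) (cobj K n dY (i - 1))) \<and>
    cp K (h 1) (dX 0) = zr K (cobj K n dX 0) (cobj K n dY 0) \<and>
    cp K (dY n) (h (Suc n)) = zr K (cobj K n dX (Suc n)) (cobj K n dY (Suc n)) \<and>
    (\<forall>i. 1 \<le> i \<and> i \<le> n \<longrightarrow>
       ad K (g i) (ng K (f i)) = ad K (cp K (dY (i - 1)) (h i)) (cp K (h (Suc i)) (dX i))))"

definition homotopy_equivalent :: "('o,'m,'x) acat_scheme \<Rightarrow> nat \<Rightarrow> (nat \<Rightarrow> 'm) \<Rightarrow> (nat \<Rightarrow> 'm) \<Rightarrow> bool" where
  "homotopy_equivalent K n dX dY \<longleftrightarrow>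
    cobj K n dX 0 = cobj K n dY 0 \<and> cobj K n dX (Suc n) = cobj K n dY (Suc n) \<and>
    (\<exists>f g. chain_map K n dX dY f \<and> chain_map K n dY dX g \<and>
       f 0 = idn K (cobj K n dX 0) \<and> f (Suc n) = idn K (cobj K n dX (Suc n)) \<and>
       g 0 = idn K (cobj K n dX 0) \<and> g (Suc n) = idn K (cobj K n dX (Suc n)) \<and>
       homotopic K n dX dX (\<lambda>i. cp K (g i) (f i)) (\<lambda>i. idn K (cobj K n dX i)) \<and>
       homotopic K n dY dY (\<lambda>i. cp K (f i) (g i)) (\<lambda>i. idn K (cobj K n dY i)))"

definition is_exangle :: "('o,'m,'x) acat_scheme \<Rightarrow> ('o,'m,'e) bifun \<Rightarrow> nat \<Rightarrow> 'o \<Rightarrow> 'o \<Rightarrow> 'e \<Rightarrow> (nat \<Rightarrow> 'm) \<Rightarrow> bool" where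
  "is_exangle K E n C A \<delta> d \<longleftrightarrow>
    is_complex K n d \<and> cobj K n d 0 = A \<and> cobj K n d (Suc n) = C \<and> \<delta> \<in> Ex E C A \<and>
    cov E C (d 0) \<delta> = ezero E C (cobj K n d 1) \<and>
    ctr E (d n) A \<delta> = ezero E (cobj K n d n) A \<and>
    \<comment> \<open>exactness of C(-,X^0) \<rightarrow> ... \<rightarrow> C(-,X^{n+1}) \<rightarrow> E(-,X^0)\<close>
    (\<forall>W\<in>Ob K.
      (\<forall>i. 1 \<le> i \<and> i \<le> n \<longrightarrow> (\<forall>g\<in>hom K W (cobj K n d i).
          cp K (d i) g = zr K W (cobj K n d (Suc i)) \<longleftrightarrow>
          (\<exists>h\<in>hom K W (cobj K n d (i - 1)). g = cp K (d (i - 1)) h))) \<and>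
      (\<forall>g\<in>hom K W C. ctr E g A \<delta> = ezero E W A \<longleftrightarrow>
          (\<exists>h\<in>hom K W (cobj K n d n). g = cp K (d n) h))) \<and>
    \<comment> \<open>exactness of C(X^{n+1},-) \<rightarrow> ... \<rightarrow> C(X^0,-) \<rightarrow> E(X^{n+1},-)\<close>
    (\<forall>W\<in>Ob K.
      (\<forall>i. 1 \<le> i \<and> i \<le> n \<longrightarrow> (\<forall>g\<in>hom K (cobj K n d i) W.
          cp K g (d (i - 1)) = zr K (cobj K n d (i - 1)) W \<longleftrightarrow>
          (\<exists>h\<in>hom K (cobj K n d (Suc i)) W. g = cp K h (d i)))) \<and>
      (\<forall>g\<in>hom K A W. cov E C g \<delta> = ezero E C W \<longleftrightarrow>
          (\<exists>h\<in>hom K (cobj K n d 1) W. g = cp K h (d 0))))"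

definition bpd :: "('o,'m,'x) acat_scheme \<Rightarrow> 'o \<Rightarrow> 'o \<Rightarrow> 'o \<times> 'm \<times> 'm \<times> 'm \<times> 'm" where
  "bpd K A B = (SOME (P,i1,i2,p1,p2). is_biproduct K A B P i1 i2 p1 p2)"

definition bobj where "bobj K A B = fst (bpd K A B)"
definition bi1 where "bi1 K A B = fst (snd (bpd K A B))"
definition bi2 where "bi2 K A B = fst (snd (snd (bpd K A B)))"
definition bp1 where "bp1 K A B = fst (snd (snd (snd (bpd K A B))))"
definition bp2 where "bp2 K A B = snd (snd (snd (snd (bpd K A B))))"

text \<open>column [u; v] : W \<rightarrow> A \<oplus> B, row [u, v] : A \<oplus> B \<rightarrow> W,
  matrix [[a, b], [c, e]] : A \<oplus> B \<rightarrow> A' \<oplus> B'.\<close>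
definition mcol where
  "mcol K A B u v = ad K (cp K (bi1 K A B) u) (cp K (bi2 K A B) v)"
definition mrow where
  "mrow K A B u v = ad K (cp K u (bp1 K A B)) (cp K v (bp2 K A B))"
definition mmat where
  "mmat K A B A' B' a b c e =
     ad K (ad K (cp K (bi1 K A' B') (cp K a (bp1 K A B))) (cp K (bi1 K A' B') (cp K b (bp2 K A B))))
          (ad K (cp K (bi2 K A' B') (cp K c (bp1 K A B))) (cp K (bi2 K A' B') (cp K e (bp2 K A B))))"

text \<open>Mapping cone of f : X \<rightarrow> Y with f^0 = 1:
  X^1 \<rightarrow> X^2 \<oplus> Y^1 \<rightarrow> ... \<rightarrow> X^{n+1} \<oplus> Y^n \<rightarrow> Y^{n+1}.\<close>
definition mcone :: "('o,'m,'x) acat_scheme \<Rightarrow> nat \<Rightarrow> (nat \<Rightarrow> 'm) \<Rightarrow> (nat \<Rightarrow> 'm) \<Rightarrow> (nat \<Rightarrow> 'm) \<Rightarrow> nat \<Rightarrow> 'm" where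
  "mcone K n dX dY f i =
    (let X = cobj K n dX; Y = cobj K n dY in
     if i = 0 then mcol K (X 2) (Y 1) (ng K (dX 1)) (f 1)
     else if i < n then mmat K (X (Suc i)) (Y i) (X (Suc (Suc i))) (Y (Suc i))
                          (ng K (dX (Suc i))) (zr K (Y i) (X (Suc (Suc i)))) (f (Suc i)) (dY i)
     else mrow K (X (Suc n)) (Y n) (f (Suc n)) (dY n))"

text \<open>Dual cone of f : X \<rightarrow> Y with f^{n+1} = 1:
  X^0 \<rightarrow> X^1 \<oplus> Y^0 \<rightarrow> ... \<rightarrow> X^n \<oplus> Y^{n-1} \<rightarrow> Y^n.\<close>
definition mcocone :: "('o,'m,'x) acat_scheme \<Rightarrow> nat \<Rightarrow> (nat \<Rightarrow> 'm) \<Rightarrow> (nat \<Rightarrow> 'm) \<Rightarrow> (nat \<Rightarrow> 'm) \<Rightarrow> nat \<Rightarrow> 'm" where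
  "mcocone K n dX dY f i =
    (let X = cobj K n dX; Y = cobj K n dY in
     if i = 0 then mcol K (X 1) (Y 0) (ng K (dX 0)) (f 0)
     else if i < n then mmat K (X i) (Y (i - 1)) (X (Suc i)) (Y i)
                          (ng K (dX i)) (zr K (Y (i - 1)) (X (Suc i))) (f i) (dY (i - 1))
     else mrow K (X n) (Y (n - 1)) (f n) (dY (n - 1)))"

text \<open>s C A \<delta> is the class s(\<delta>) of complexes realising \<delta> \<in> E(C,A).\<close>

definition exact_realisation ::
  "('o,'m,'x) acat_scheme \<Rightarrow> ('o,'m,'e) bifun \<Rightarrow> nat \<Rightarrow> ('o \<Rightarrow> 'o \<Rightarrow> 'e \<Rightarrow> (nat \<Rightarrow> 'm) set) \<Rightarrow> bool" where
  "exact_realisation K E n s \<longleftrightarrow>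
    \<comment> \<open>s(\<delta>) is a homotopy equivalence class, and (R1) its members are n-exangles\<close>
    (\<forall>C\<in>Ob K. \<forall>A\<in>Ob K. \<forall>\<delta>\<in>Ex E C A.
       s C A \<delta> \<noteq> {} \<and>
       (\<forall>d\<in>s C A \<delta>. is_exangle K E n C A \<delta> d) \<and>
       (\<forall>d\<in>s C A \<delta>. \<forall>d'. is_complex K n d' \<longrightarrow> (d' \<in> s C A \<delta> \<longleftrightarrow> homotopy_equivalent K n d d'))) \<and>
    \<comment> \<open>(R0)\<close>
    (\<forall>C\<in>Ob K. \<forall>A\<in>Ob K. \<forall>D\<in>Ob K. \<forall>B\<in>Ob K. \<forall>\<alpha>\<in>Ex E C A. \<forall>\<beta>\<in>Ex E D B.
       \<forall>a\<in>hom K A B. \<forall>c\<in>hom K C D. cov E C a \<alpha> = ctr E c B \<beta> \<longrightarrow>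
       (\<forall>dX\<in>s C A \<alpha>. \<forall>dY\<in>s D B \<beta>. \<exists>f. chain_map K n dX dY f \<and> f 0 = a \<and> f (Suc n) = c)) \<and>
    \<comment> \<open>(R2)\<close>
    (\<forall>Z. is_zero_object K Z \<longrightarrow> (\<forall>A\<in>Ob K.
       (\<lambda>i. if i = 0 then idn K A else if i = 1 then zr K A Z else zr K Z Z) \<in> s Z A (ezero E Z A) \<and>
       (\<lambda>i. if i = n then idn K A else if Suc i = n then zr K Z A else zr K Z Z) \<in> s A Z (ezero E A Z)))"

definition s_inflation where
  "s_inflation K E n s f \<longleftrightarrow> (\<exists>C\<in>Ob K. \<exists>A\<in>Ob K. \<exists>\<delta>\<in>Ex E C A. \<exists>d\<in>s C A \<delta>. d 0 = f)"

definition s_deflation where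
  "s_deflation K E n s f \<longleftrightarrow> (\<exists>C\<in>Ob K. \<exists>A\<in>Ob K. \<exists>\<delta>\<in>Ex E C A. \<exists>d\<in>s C A \<delta>. d n = f)"

definition n_exangulated ::
  "nat \<Rightarrow> ('o,'m,'x) acat_scheme \<Rightarrow> ('o,'m,'e) bifun \<Rightarrow> ('o \<Rightarrow> 'o \<Rightarrow> 'e \<Rightarrow> (nat \<Rightarrow> 'm) set) \<Rightarrow> bool" where
  "n_exangulated n K E s \<longleftrightarrow> 1 \<le> n \<and> additive K \<and> biadditive_functor K E \<and> exact_realisation K E n s \<and>
    \<comment> \<open>(EA1)\<close>
    (\<forall>f\<in>Ar K. \<forall>g\<in>Ar K. cd K f = dm K g \<and> s_inflation K E n s f \<and> s_inflation K E n s g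
        \<longrightarrow> s_inflation K E n s (cp K g f)) \<and>
    (\<forall>f\<in>Ar K. \<forall>g\<in>Ar K. cd K f = dm K g \<and> s_deflation K E n s f \<and> s_deflation K E n s g
        \<longrightarrow> s_deflation K E n s (cp K g f)) \<and>
    \<comment> \<open>(EA2)\<close>
    (\<forall>D\<in>Ob K. \<forall>A\<in>Ob K. \<forall>\<delta>\<in>Ex E D A. \<forall>c\<in>Ar K. cd K c = D \<longrightarrow>
       (\<forall>dX\<in>s (dm K c) A (ctr E c A \<delta>). \<forall>dY\<in>s D A \<delta>.
          \<exists>f. chain_map K n dX dY f \<and> f 0 = idn K A \<and> f (Suc n) = c \<and>
              mcone K n dX dY f \<in> s D (cobj K n dX 1) (cov E D (dX 0) \<delta>))) \<and>
    \<comment> \<open>(EA2 op)\<close>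
    (\<forall>D\<in>Ob K. \<forall>A\<in>Ob K. \<forall>\<delta>\<in>Ex E D A. \<forall>a\<in>Ar K. dm K a = A \<longrightarrow>
       (\<forall>dX\<in>s D A \<delta>. \<forall>dY\<in>s D (cd K a) (cov E D a \<delta>).
          \<exists>f. chain_map K n dX dY f \<and> f 0 = a \<and> f (Suc n) = idn K D \<and>
              mcocone K n dX dY f \<in> s (cobj K n dY n) A (ctr E (dY n) A \<delta>)))"

definition EExt :: "('o,'m) acat \<Rightarrow> ('o,'m,'e) bifun \<Rightarrow>
    ('o \<times> 'o \<times> 'e, ('o \<times> 'o \<times> 'e) \<times> ('o \<times> 'o \<times> 'e) \<times> ('m \<times> 'm)) acat" where
  "EExt K E = \<lparr>
     Ob = {(C, A, \<alpha>). C \<in> Ob K \<and> A \<in> Ob K \<and> \<alpha> \<in> Ex E C A},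
     Ar = {((C, A, \<alpha>), (D, B, \<beta>), (a, c)). C \<in> Ob K \<and> A \<in> Ob K \<and> \<alpha> \<in> Ex E C A \<and>
             D \<in> Ob K \<and> B \<in> Ob K \<and> \<beta> \<in> Ex E D B \<and> a \<in> hom K A B \<and> c \<in> hom K C D \<and>
             cov E C a \<alpha> = ctr E c B \<beta>},
     dm = (\<lambda>(X, Y, m). X),
     cd = (\<lambda>(X, Y, m). Y),
     cp = (\<lambda>(Y', Z, (b, d)) (X, Y, (a, c)). (X, Z, (cp K b a, cp K d c))),
     idn = (\<lambda>(C, A, \<alpha>). ((C, A, \<alpha>), (C, A, \<alpha>), (idn K A, idn K C))),
     zr = (\<lambda>(C, A, \<alpha>) (D, B, \<beta>). ((C, A, \<alpha>), (D, B, \<beta>), (zr K A B, zr K C D))),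
     ad = (\<lambda>(X, Y, (a, c)) (X', Y', (a', c')). (X, Y, (ad K a a', ad K c c'))),
     ng = (\<lambda>(X, Y, (a, c)). (X, Y, (ng K a, ng K c))) \<rparr>"

end

theory Submission
  imports Defs
begin

lemma cat_of: "preadditive K \<Longrightarrow> category K"
  unfolding preadditive_def by (rule conjunct1)

lemma pre_obj: "preadditive K \<Longrightarrow> (\<forall>A\<in>Ob K. \<forall>B\<in>Ob K. zr K A B \<in> hom K A B \<and>
       (\<forall>f\<in>hom K A B. \<forall>g\<in>hom K A B. ad K f g \<in> hom K A B \<and> ad K f g = ad K g f) \<and>
       (\<forall>f\<in>hom K A B. \<forall>g\<in>hom K A B. \<forall>h\<in>hom K A B. ad K (ad K f g) h = ad K f (ad K g h)) \<and>
       (\<forall>f\<in>hom K A B. ad K f (zr K A B) = f \<and> ng K f \<in> hom K A B \<and> ad K f (ng K f) = zr K A B))"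
  unfolding preadditive_def by (drule conjunct2, erule conjunct1)

lemma pre_dl: "preadditive K \<Longrightarrow> (\<forall>f\<in>Ar K. \<forall>g\<in>Ar K. \<forall>h\<in>Ar K. dm K f = dm K g \<and> cd K f = cd K g \<and> cd K f = dm K h \<longrightarrow>
        cp K h (ad K f g) = ad K (cp K h f) (cp K h g))"
  unfolding preadditive_def by (drule conjunct2, drule conjunct2, erule conjunct1)

lemma pre_dr: "preadditive K \<Longrightarrow> (\<forall>f\<in>Ar K. \<forall>g\<in>Ar K. \<forall>h\<in>Ar K. dm K f = dm K g \<and> cd K f = cd K g \<and> cd K h = dm K f \<longrightarrow>
        cp K (ad K f g) h = ad K (cp K f h) (cp K g h))"
  unfolding preadditive_def by (drule conjunct2, drule conjunct2, erule conjunct2)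

lemma catD: "category K \<Longrightarrow>
    (\<forall>f\<in>Ar K. dm K f \<in> Ob K \<and> cd K f \<in> Ob K) \<and>
    (\<forall>A\<in>Ob K. idn K A \<in> hom K A A) \<and>
    (\<forall>f\<in>Ar K. \<forall>g\<in>Ar K. cd K f = dm K g \<longrightarrow> cp K g f \<in> hom K (dm K f) (cd K g)) \<and>
    (\<forall>f\<in>Ar K. cp K f (idn K (dm K f)) = f \<and> cp K (idn K (cd K f)) f = f) \<and>
    (\<forall>f\<in>Ar K. \<forall>g\<in>Ar K. \<forall>h\<in>Ar K. cd K f = dm K g \<and> cd K g = dm K h \<longrightarrow>
        cp K h (cp K g f) = cp K (cp K h g) f)"
  unfolding category_def by assumption

lemma homD: "f \<in> hom K A B \<Longrightarrow> f \<in> Ar K \<and> dm K f = A \<and> cd K f = B"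
  unfolding hom_def by simp

lemma homI: "f \<in> Ar K \<Longrightarrow> dm K f = A \<Longrightarrow> cd K f = B \<Longrightarrow> f \<in> hom K A B"
  unfolding hom_def by simp

lemma hom_Ob: "category K \<Longrightarrow> f \<in> hom K A B \<Longrightarrow> A \<in> Ob K \<and> B \<in> Ob K"
proof -
  assume c: "category K" and f: "f \<in> hom K A B"
  have H: "\<forall>f\<in>Ar K. dm K f \<in> Ob K \<and> cd K f \<in> Ob K" using catD[OF c] by (rule conjunct1)
  have f': "f \<in> Ar K" "dm K f = A" "cd K f = B" using homD[OF f] by (blast+)
  have "dm K f \<in> Ob K \<and> cd K f \<in> Ob K" using H f'(1) by (rule bspec)
  thus ?thesis unfolding f'(2,3) .
qed

lemma comp_hom: "category K \<Longrightarrow> f \<in> hom K A B \<Longrightarrow> g \<in> hom K B C \<Longrightarrow> cp K g f \<in> hom K A C"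
proof -
  assume c: "category K" and f: "f \<in> hom K A B" and g: "g \<in> hom K B C"
  have H: "\<forall>f\<in>Ar K. \<forall>g\<in>Ar K. cd K f = dm K g \<longrightarrow> cp K g f \<in> hom K (dm K f) (cd K g)"
    using catD[OF c] by (rule conjunct1[OF conjunct2[OF conjunct2]])
  have f': "f \<in> Ar K" "dm K f = A" "cd K f = B" using homD[OF f] by (blast+)
  have g': "g \<in> Ar K" "dm K g = B" "cd K g = C" using homD[OF g] by (blast+)
  have "cp K g f \<in> hom K (dm K f) (cd K g)" using H f'(1) g'(1) f'(3) g'(2) by simp
  thus ?thesis unfolding f'(2) g'(3) .
qed

lemma id_hom: "category K \<Longrightarrow> A \<in> Ob K \<Longrightarrow> idn K A \<in> hom K A A"
proof -
  assume c: "category K" and A: "A \<in> Ob K"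
  have H: "\<forall>A\<in>Ob K. idn K A \<in> hom K A A" using catD[OF c] by (rule conjunct1[OF conjunct2])
  show ?thesis using H A by (rule bspec)
qed

lemma id_r: "category K \<Longrightarrow> f \<in> hom K A B \<Longrightarrow> cp K f (idn K A) = f"
proof -
  assume c: "category K" and f: "f \<in> hom K A B"
  have H: "\<forall>f\<in>Ar K. cp K f (idn K (dm K f)) = f \<and> cp K (idn K (cd K f)) f = f"
    using catD[OF c] by (rule conjunct1[OF conjunct2[OF conjunct2[OF conjunct2]]])
  have f': "f \<in> Ar K" "dm K f = A" "cd K f = B" using homD[OF f] by (blast+)
  have "cp K f (idn K (dm K f)) = f" using H f'(1) by simp
  thus ?thesis unfolding f'(2) .
qed

lemma id_l: "category K \<Longrightarrow> f \<in> hom K A B \<Longrightarrow> cp K (idn K B) f = f"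
proof -
  assume c: "category K" and f: "f \<in> hom K A B"
  have H: "\<forall>f\<in>Ar K. cp K f (idn K (dm K f)) = f \<and> cp K (idn K (cd K f)) f = f"
    using catD[OF c] by (rule conjunct1[OF conjunct2[OF conjunct2[OF conjunct2]]])
  have f': "f \<in> Ar K" "dm K f = A" "cd K f = B" using homD[OF f] by (blast+)
  have "cp K (idn K (cd K f)) f = f" using H f'(1) by simp
  thus ?thesis unfolding f'(3) .
qed

lemma assoc: "category K \<Longrightarrow> f \<in> hom K A B \<Longrightarrow> g \<in> hom K B C \<Longrightarrow> h \<in> hom K C D \<Longrightarrow>
   cp K h (cp K g f) = cp K (cp K h g) f"
proof -
  assume c: "category K" and f: "f \<in> hom K A B" and g: "g \<in> hom K B C" and h: "h \<in> hom K C D"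
  have H: "\<forall>f\<in>Ar K. \<forall>g\<in>Ar K. \<forall>h\<in>Ar K. cd K f = dm K g \<and> cd K g = dm K h \<longrightarrow>
        cp K h (cp K g f) = cp K (cp K h g) f"
    using catD[OF c] by (rule conjunct2[OF conjunct2[OF conjunct2[OF conjunct2]]])
  have f': "f \<in> Ar K" "dm K f = A" "cd K f = B" using homD[OF f] by (blast+)
  have g': "g \<in> Ar K" "dm K g = B" "cd K g = C" using homD[OF g] by (blast+)
  have h': "h \<in> Ar K" "dm K h = C" "cd K h = D" using homD[OF h] by (blast+)
  have "cd K f = dm K g \<and> cd K g = dm K h" using f'(3) g'(2,3) h'(2) by simp
  thus ?thesis by (rule H[rule_format, OF f'(1) g'(1) h'(1)])
qed

lemma hom_Ob2: "preadditive K \<Longrightarrow> f \<in> hom K A B \<Longrightarrow> A \<in> Ob K \<and> B \<in> Ob K"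
  by (rule hom_Ob[OF cat_of])

lemma pre_AB: "preadditive K \<Longrightarrow> A \<in> Ob K \<Longrightarrow> B \<in> Ob K \<Longrightarrow> zr K A B \<in> hom K A B \<and>
       (\<forall>f\<in>hom K A B. \<forall>g\<in>hom K A B. ad K f g \<in> hom K A B \<and> ad K f g = ad K g f) \<and>
       (\<forall>f\<in>hom K A B. \<forall>g\<in>hom K A B. \<forall>h\<in>hom K A B. ad K (ad K f g) h = ad K f (ad K g h)) \<and>
       (\<forall>f\<in>hom K A B. ad K f (zr K A B) = f \<and> ng K f \<in> hom K A B \<and> ad K f (ng K f) = zr K A B)"
proof -
  assume P: "preadditive K" and A: "A \<in> Ob K" and B: "B \<in> Ob K"
  show ?thesis using bspec[OF bspec[OF pre_obj[OF P] A] B] .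
qed

lemma zr_hom: "preadditive K \<Longrightarrow> A \<in> Ob K \<Longrightarrow> B \<in> Ob K \<Longrightarrow> zr K A B \<in> hom K A B"
  by (drule pre_AB, assumption+, erule conjunct1)

lemma pre_f: "preadditive K \<Longrightarrow> f \<in> hom K A B \<Longrightarrow>
   (\<forall>f\<in>hom K A B. \<forall>g\<in>hom K A B. ad K f g \<in> hom K A B \<and> ad K f g = ad K g f) \<and>
       (\<forall>f\<in>hom K A B. \<forall>g\<in>hom K A B. \<forall>h\<in>hom K A B. ad K (ad K f g) h = ad K f (ad K g h)) \<and>
       (\<forall>f\<in>hom K A B. ad K f (zr K A B) = f \<and> ng K f \<in> hom K A B \<and> ad K f (ng K f) = zr K A B)"
proof -
  assume P: "preadditive K" and f: "f \<in> hom K A B"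
  have AB: "A \<in> Ob K \<and> B \<in> Ob K" using hom_Ob2[OF P f] .
  show ?thesis using conjunct2[OF pre_AB[OF P conjunct1[OF AB] conjunct2[OF AB]]] .
qed

lemma ad_hom: "preadditive K \<Longrightarrow> f \<in> hom K A B \<Longrightarrow> g \<in> hom K A B \<Longrightarrow> ad K f g \<in> hom K A B"
proof - assume P: "preadditive K" and f: "f \<in> hom K A B" and g: "g \<in> hom K A B"
  show ?thesis using conjunct1[OF bspec[OF bspec[OF conjunct1[OF pre_f[OF P f]] f] g]] . qed

lemma ad_comm: "preadditive K \<Longrightarrow> f \<in> hom K A B \<Longrightarrow> g \<in> hom K A B \<Longrightarrow> ad K f g = ad K g f"
proof - assume P: "preadditive K" and f: "f \<in> hom K A B" and g: "g \<in> hom K A B"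
  show ?thesis using conjunct2[OF bspec[OF bspec[OF conjunct1[OF pre_f[OF P f]] f] g]] . qed

lemma ad_assoc: "preadditive K \<Longrightarrow> f \<in> hom K A B \<Longrightarrow> g \<in> hom K A B \<Longrightarrow> h \<in> hom K A B \<Longrightarrow> ad K (ad K f g) h = ad K f (ad K g h)"
proof - assume P: "preadditive K" and f: "f \<in> hom K A B" and g: "g \<in> hom K A B" and h: "h \<in> hom K A B"
  show ?thesis using bspec[OF bspec[OF bspec[OF conjunct1[OF conjunct2[OF pre_f[OF P f]]] f] g] h] . qed

lemma ad_zr: "preadditive K \<Longrightarrow> f \<in> hom K A B \<Longrightarrow> ad K f (zr K A B) = f"
proof - assume P: "preadditive K" and f: "f \<in> hom K A B"
  show ?thesis using conjunct1[OF bspec[OF conjunct2[OF conjunct2[OF pre_f[OF P f]]] f]] . qed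

lemma ng_hom: "preadditive K \<Longrightarrow> f \<in> hom K A B \<Longrightarrow> ng K f \<in> hom K A B"
proof - assume P: "preadditive K" and f: "f \<in> hom K A B"
  show ?thesis using conjunct1[OF conjunct2[OF bspec[OF conjunct2[OF conjunct2[OF pre_f[OF P f]]] f]]] . qed

lemma ad_ng: "preadditive K \<Longrightarrow> f \<in> hom K A B \<Longrightarrow> ad K f (ng K f) = zr K A B"
proof - assume P: "preadditive K" and f: "f \<in> hom K A B"
  show ?thesis using conjunct2[OF conjunct2[OF bspec[OF conjunct2[OF conjunct2[OF pre_f[OF P f]]] f]]] . qed

lemma dist_l: "preadditive K \<Longrightarrow> f \<in> hom K A B \<Longrightarrow> g \<in> hom K A B \<Longrightarrow> h \<in> hom K B C \<Longrightarrow>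
  cp K h (ad K f g) = ad K (cp K h f) (cp K h g)"
  using pre_dl[rule_format, of K f g h] homD[of f K A B] homD[of g K A B] homD[of h K B C] by auto

lemma dist_r: "preadditive K \<Longrightarrow> f \<in> hom K B C \<Longrightarrow> g \<in> hom K B C \<Longrightarrow> h \<in> hom K A B \<Longrightarrow>
  cp K (ad K f g) h = ad K (cp K f h) (cp K g h)"
  using pre_dr[rule_format, of K f g h] homD[of f K B C] homD[of g K B C] homD[of h K A B] by auto

lemma idem_zr: "preadditive K \<Longrightarrow> x \<in> hom K A B \<Longrightarrow> ad K x x = x \<Longrightarrow> x = zr K A B"
proof -
  assume P: "preadditive K" and x: "x \<in> hom K A B" and e: "ad K x x = x"
  have "x = ad K x (ad K x (ng K x))" using P x by (simp add: ad_ng ad_zr)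
  also have "\<dots> = ad K (ad K x x) (ng K x)" using P x ng_hom ad_assoc by metis
  also have "\<dots> = zr K A B" using e P x ad_ng by simp
  finally show ?thesis .
qed

lemma zr_zr: "preadditive K \<Longrightarrow> A \<in> Ob K \<Longrightarrow> B \<in> Ob K \<Longrightarrow> ad K (zr K A B) (zr K A B) = zr K A B"
  using zr_hom ad_zr by metis

lemma comp_zr_r: "preadditive K \<Longrightarrow> h \<in> hom K B C \<Longrightarrow> A \<in> Ob K \<Longrightarrow> cp K h (zr K A B) = zr K A C"
proof -
  assume P: "preadditive K" and h: "h \<in> hom K B C" and A: "A \<in> Ob K"
  have B: "B \<in> Ob K" using h P cat_of hom_Ob by metis
  have z: "zr K A B \<in> hom K A B" using P A B zr_hom by metis
  have m: "cp K h (zr K A B) \<in> hom K A C" using comp_hom[OF cat_of[OF P] z h] .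
  have "ad K (cp K h (zr K A B)) (cp K h (zr K A B)) = cp K h (zr K A B)"
    using dist_l[OF P z z h] zr_zr[OF P A B] by simp
  thus ?thesis using idem_zr[OF P m] by simp
qed

lemma comp_zr_l: "preadditive K \<Longrightarrow> h \<in> hom K A B \<Longrightarrow> C \<in> Ob K \<Longrightarrow> cp K (zr K B C) h = zr K A C"
proof -
  assume P: "preadditive K" and h: "h \<in> hom K A B" and C: "C \<in> Ob K"
  have B: "B \<in> Ob K" using h P cat_of hom_Ob by metis
  have z: "zr K B C \<in> hom K B C" using P C B zr_hom by metis
  have m: "cp K (zr K B C) h \<in> hom K A C" using comp_hom[OF cat_of[OF P] h z] .
  have "ad K (cp K (zr K B C) h) (cp K (zr K B C) h) = cp K (zr K B C) h"
    using dist_r[OF P z z h] zr_zr[OF P B C] by simp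
  thus ?thesis using idem_zr[OF P m] by simp
qed

lemma ng_uniq: "preadditive K \<Longrightarrow> f \<in> hom K A B \<Longrightarrow> g \<in> hom K A B \<Longrightarrow> ad K f g = zr K A B \<Longrightarrow> g = ng K f"
proof -
  assume P: "preadditive K" and f: "f \<in> hom K A B" and g: "g \<in> hom K A B" and e: "ad K f g = zr K A B"
  have nf: "ng K f \<in> hom K A B" using P f ng_hom by metis
  have "g = ad K g (ad K f (ng K f))" using P f g by (simp add: ad_ng ad_zr)
  also have "\<dots> = ad K (ad K g f) (ng K f)" using P f g nf ad_assoc by metis
  also have "\<dots> = ad K (zr K A B) (ng K f)" using e P f g ad_comm by metis
  also have "\<dots> = ad K (ng K f) (zr K A B)" using P nf zr_hom hom_Ob cat_of f ad_comm by metis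
  also have "\<dots> = ng K f" using P nf ad_zr by metis
  finally show ?thesis .
qed

lemma grp_idem: "ab_group_on S pl z mi \<Longrightarrow> x \<in> S \<Longrightarrow> pl x x = x \<Longrightarrow> x = z"
  unfolding ab_group_on_def by metis

lemma grp_zl: "ab_group_on S pl z mi \<Longrightarrow> x \<in> S \<Longrightarrow> pl z x = x"
  unfolding ab_group_on_def by metis

lemma grp_zr: "ab_group_on S pl z mi \<Longrightarrow> x \<in> S \<Longrightarrow> pl x z = x"
  unfolding ab_group_on_def by metis

lemma grp_z: "ab_group_on S pl z mi \<Longrightarrow> z \<in> S"
  unfolding ab_group_on_def by metis

lemma bfD: assumes "biadditive_functor K E" shows
  "(\<forall>C\<in>Ob K. \<forall>A\<in>Ob K. ab_group_on (bifun.Ex E C A) (eadd E C A) (ezero E C A) (eneg E C A))"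
  "(\<forall>C\<in>Ob K. \<forall>a\<in>Ar K. \<forall>\<alpha>\<in>bifun.Ex E C (dm K a). cov E C a \<alpha> \<in> bifun.Ex E C (cd K a))"
  "(\<forall>C\<in>Ob K. \<forall>a\<in>Ar K. \<forall>\<alpha>\<in>bifun.Ex E C (dm K a). \<forall>\<beta>\<in>bifun.Ex E C (dm K a).
        cov E C a (eadd E C (dm K a) \<alpha> \<beta>) = eadd E C (cd K a) (cov E C a \<alpha>) (cov E C a \<beta>))"
  "(\<forall>C\<in>Ob K. \<forall>A\<in>Ob K. \<forall>\<alpha>\<in>bifun.Ex E C A. cov E C (idn K A) \<alpha> = \<alpha>)"
  "(\<forall>C\<in>Ob K. \<forall>a\<in>Ar K. \<forall>b\<in>Ar K. cd K a = dm K b \<longrightarrow>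
        (\<forall>\<alpha>\<in>bifun.Ex E C (dm K a). cov E C (cp K b a) \<alpha> = cov E C b (cov E C a \<alpha>)))"
  "(\<forall>C\<in>Ob K. \<forall>a\<in>Ar K. \<forall>a'\<in>Ar K. dm K a = dm K a' \<and> cd K a = cd K a' \<longrightarrow>
        (\<forall>\<alpha>\<in>bifun.Ex E C (dm K a). cov E C (ad K a a') \<alpha> = eadd E C (cd K a) (cov E C a \<alpha>) (cov E C a' \<alpha>)))"
  "(\<forall>A\<in>Ob K. \<forall>c\<in>Ar K. \<forall>\<alpha>\<in>bifun.Ex E (cd K c) A. ctr E c A \<alpha> \<in> bifun.Ex E (dm K c) A)"
  "(\<forall>A\<in>Ob K. \<forall>c\<in>Ar K. \<forall>c'\<in>Ar K. cd K c' = dm K c \<longrightarrow>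
        (\<forall>\<alpha>\<in>bifun.Ex E (cd K c) A. ctr E (cp K c c') A \<alpha> = ctr E c' A (ctr E c A \<alpha>)))"
  "(\<forall>A\<in>Ob K. \<forall>c\<in>Ar K. \<forall>c'\<in>Ar K. dm K c = dm K c' \<and> cd K c = cd K c' \<longrightarrow>
        (\<forall>\<alpha>\<in>bifun.Ex E (cd K c) A. ctr E (ad K c c') A \<alpha> = eadd E (dm K c) A (ctr E c A \<alpha>) (ctr E c' A \<alpha>)))"
  "(\<forall>a\<in>Ar K. \<forall>c\<in>Ar K. \<forall>\<alpha>\<in>bifun.Ex E (cd K c) (dm K a).
        ctr E c (cd K a) (cov E (cd K c) a \<alpha>) = cov E (dm K c) a (ctr E c (dm K a) \<alpha>))"
  using assms unfolding biadditive_functor_def apply - by (elim conjE, assumption)+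

lemma grp: "biadditive_functor K E \<Longrightarrow> C \<in> Ob K \<Longrightarrow> A \<in> Ob K \<Longrightarrow> ab_group_on (bifun.Ex E C A) (eadd E C A) (ezero E C A) (eneg E C A)"
  using bfD(1) by blast

lemma cov_in: "biadditive_functor K E \<Longrightarrow> C \<in> Ob K \<Longrightarrow> a \<in> hom K A B \<Longrightarrow> x \<in> bifun.Ex E C A \<Longrightarrow> cov E C a x \<in> bifun.Ex E C B"
  unfolding hom_def using bfD(2) by blast

lemma cov_add: "biadditive_functor K E \<Longrightarrow> C \<in> Ob K \<Longrightarrow> a \<in> hom K A B \<Longrightarrow> x \<in> bifun.Ex E C A \<Longrightarrow> y \<in> bifun.Ex E C A \<Longrightarrow>
   cov E C a (eadd E C A x y) = eadd E C B (cov E C a x) (cov E C a y)"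
  unfolding hom_def using bfD(3) by blast

lemma cov_id: "biadditive_functor K E \<Longrightarrow> C \<in> Ob K \<Longrightarrow> A \<in> Ob K \<Longrightarrow> x \<in> bifun.Ex E C A \<Longrightarrow> cov E C (idn K A) x = x"
  using bfD(4) by blast

lemma cov_comp: "biadditive_functor K E \<Longrightarrow> C \<in> Ob K \<Longrightarrow> a \<in> hom K A B \<Longrightarrow> b \<in> hom K B B' \<Longrightarrow> x \<in> bifun.Ex E C A \<Longrightarrow>
   cov E C (cp K b a) x = cov E C b (cov E C a x)"
  unfolding hom_def using bfD(5)[rule_format, of K E C a b x] by auto

lemma cov_ad: "biadditive_functor K E \<Longrightarrow> C \<in> Ob K \<Longrightarrow> a \<in> hom K A B \<Longrightarrow> a' \<in> hom K A B \<Longrightarrow> x \<in> bifun.Ex E C A \<Longrightarrow>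
   cov E C (ad K a a') x = eadd E C B (cov E C a x) (cov E C a' x)"
  unfolding hom_def using bfD(6)[rule_format, of K E C a a' x] by auto

lemma ctr_in: "biadditive_functor K E \<Longrightarrow> A \<in> Ob K \<Longrightarrow> c \<in> hom K C' C \<Longrightarrow> x \<in> bifun.Ex E C A \<Longrightarrow> ctr E c A x \<in> bifun.Ex E C' A"
  unfolding hom_def using bfD(7) by blast

lemma ctr_comp: "biadditive_functor K E \<Longrightarrow> A \<in> Ob K \<Longrightarrow> c' \<in> hom K C0 C1 \<Longrightarrow> c \<in> hom K C1 C2 \<Longrightarrow> x \<in> bifun.Ex E C2 A \<Longrightarrow>
   ctr E (cp K c c') A x = ctr E c' A (ctr E c A x)"
  unfolding hom_def using bfD(8)[rule_format, of K E A c c' x] by auto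

lemma ctr_ad: "biadditive_functor K E \<Longrightarrow> A \<in> Ob K \<Longrightarrow> c \<in> hom K C' C \<Longrightarrow> c' \<in> hom K C' C \<Longrightarrow> x \<in> bifun.Ex E C A \<Longrightarrow>
   ctr E (ad K c c') A x = eadd E C' A (ctr E c A x) (ctr E c' A x)"
  unfolding hom_def using bfD(9)[rule_format, of K E A c c' x] by auto

lemma bif: "biadditive_functor K E \<Longrightarrow> a \<in> hom K A B \<Longrightarrow> c \<in> hom K C0 C \<Longrightarrow> x \<in> bifun.Ex E C A \<Longrightarrow>
   ctr E c B (cov E C a x) = cov E C0 a (ctr E c A x)"
  unfolding hom_def using bfD(10) by blast

lemma cov_zr_arrow: "preadditive K \<Longrightarrow> biadditive_functor K E \<Longrightarrow> C \<in> Ob K \<Longrightarrow> A \<in> Ob K \<Longrightarrow> B \<in> Ob K \<Longrightarrow>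
   x \<in> bifun.Ex E C A \<Longrightarrow> cov E C (zr K A B) x = ezero E C B"
proof -
  assume P: "preadditive K" and F: "biadditive_functor K E" and C: "C \<in> Ob K" and A: "A \<in> Ob K" and B: "B \<in> Ob K"
    and x: "x \<in> bifun.Ex E C A"
  have z: "zr K A B \<in> hom K A B" using zr_hom P A B by metis
  have "eadd E C B (cov E C (zr K A B) x) (cov E C (zr K A B) x) = cov E C (zr K A B) x"
    using cov_ad[OF F C z z x] zr_zr[OF P A B] by simp
  thus ?thesis using grp_idem[OF grp[OF F C B] cov_in[OF F C z x]] by simp
qed

lemma ctr_zr_arrow: "preadditive K \<Longrightarrow> biadditive_functor K E \<Longrightarrow> C0 \<in> Ob K \<Longrightarrow> C \<in> Ob K \<Longrightarrow> A \<in> Ob K \<Longrightarrow>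
   x \<in> bifun.Ex E C A \<Longrightarrow> ctr E (zr K C0 C) A x = ezero E C0 A"
proof -
  assume P: "preadditive K" and F: "biadditive_functor K E" and C0: "C0 \<in> Ob K" and C: "C \<in> Ob K" and A: "A \<in> Ob K"
    and x: "x \<in> bifun.Ex E C A"
  have z: "zr K C0 C \<in> hom K C0 C" using zr_hom P C0 C by metis
  have "eadd E C0 A (ctr E (zr K C0 C) A x) (ctr E (zr K C0 C) A x) = ctr E (zr K C0 C) A x"
    using ctr_ad[OF F A z z x] zr_zr[OF P C0 C] by simp
  thus ?thesis using grp_idem[OF grp[OF F C0 A] ctr_in[OF F A z x]] by simp
qed

lemma cov_ezero: "preadditive K \<Longrightarrow> biadditive_functor K E \<Longrightarrow> C \<in> Ob K \<Longrightarrow> a \<in> hom K A B \<Longrightarrow>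
   cov E C a (ezero E C A) = ezero E C B"
proof -
  assume P: "preadditive K" and F: "biadditive_functor K E" and C: "C \<in> Ob K" and a: "a \<in> hom K A B"
  have A: "A \<in> Ob K" and B: "B \<in> Ob K" using a hom_Ob cat_of P by metis+
  have G: "ab_group_on (bifun.Ex E C A) (eadd E C A) (ezero E C A) (eneg E C A)" using grp F C A by metis
  have z: "ezero E C A \<in> bifun.Ex E C A" using grp_z[OF G] .
  have "eadd E C B (cov E C a (ezero E C A)) (cov E C a (ezero E C A)) = cov E C a (ezero E C A)"
    using cov_add[OF F C a z z] grp_zr[OF G z] by simp
  thus ?thesis using grp_idem[OF grp[OF F C B] cov_in[OF F C a z]] by simp
qed


lemma split_kernel:
  assumes P: "preadditive K" and a: "a \<in> hom K A B" and a': "a' \<in> hom K B A"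
    and aa: "cp K a a' = idn K B" and k: "is_kernel K a k"
  shows "\<exists>p. p \<in> hom K A (dm K k) \<and> cp K p k = idn K (dm K k) \<and>
             cp K k p = ad K (idn K A) (ng K (cp K a' a))"
proof -
  have Cat: "category K" using P cat_of by metis
  have A: "A \<in> Ob K" and B: "B \<in> Ob K" using a hom_Ob Cat by metis+
  define A0 where "A0 = dm K k"
  have kA: "k \<in> Ar K" "cd K k = A" using k a unfolding is_kernel_def hom_def by auto
  have kh: "k \<in> hom K A0 A" using kA unfolding A0_def hom_def by auto
  have A0: "A0 \<in> Ob K" using kh hom_Ob Cat by metis
  have ak: "cp K a k = zr K A0 B" using k a unfolding is_kernel_def A0_def hom_def by auto
  have kuniv: "\<And>t. t \<in> Ar K \<Longrightarrow> cd K t = A \<Longrightarrow> cp K a t = zr K (dm K t) B \<Longrightarrow>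
      \<exists>!u. u \<in> hom K (dm K t) A0 \<and> cp K k u = t"
    using k a unfolding is_kernel_def A0_def hom_def by auto
  define x where "x = cp K a' a"
  have xh: "x \<in> hom K A A" unfolding x_def using comp_hom[OF Cat a a'] .
  have nx: "ng K x \<in> hom K A A" using ng_hom P xh by metis
  have idA: "idn K A \<in> hom K A A" using id_hom Cat A by metis
  define e where "e = ad K (idn K A) (ng K x)"
  have eh: "e \<in> hom K A A" unfolding e_def using ad_hom[OF P idA nx] .
  have ax: "cp K a x = a" unfolding x_def using assoc[OF Cat a a' a] aa id_l[OF Cat a] by simp
  have zAA: "zr K A A \<in> hom K A A" using zr_hom P A by metis
  have "ad K (cp K a x) (cp K a (ng K x)) = zr K A B"
    using dist_l[OF P xh nx a] ad_ng[OF P xh] comp_zr_r[OF P a A] by simp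
  hence anx: "cp K a (ng K x) = ng K a" using ng_uniq[OF P a comp_hom[OF Cat nx a]] ax by simp
  have ae: "cp K a e = zr K A B" unfolding e_def
    using dist_l[OF P idA nx a] id_r[OF Cat a] anx ad_ng[OF P a] by simp
  have eAr: "e \<in> Ar K" "cd K e = A" "dm K e = A" using eh unfolding hom_def by auto
  obtain p where p: "p \<in> hom K A A0" "cp K k p = e" using kuniv[OF eAr(1,2)] ae eAr(3) by metis
  have xk: "cp K x k = zr K A0 A" unfolding x_def
    using assoc[OF Cat kh a a'] ak comp_zr_r[OF P a' A0] by simp
  have "ad K (cp K x k) (cp K (ng K x) k) = zr K A0 A"
    using dist_r[OF P xh nx kh] ad_ng[OF P xh] comp_zr_l[OF P kh A] by simp
  hence nxk: "cp K (ng K x) k = zr K A0 A" using xk ad_comm ad_zr zr_hom comp_hom[OF Cat kh nx] P A0 A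
    by metis
  have ek: "cp K e k = k" unfolding e_def
    using dist_r[OF P idA nx kh] id_l[OF Cat kh] nxk ad_zr[OF P kh] by simp
  have pk: "cp K p k \<in> hom K A0 A0" using comp_hom[OF Cat kh p(1)] .
  have kpk: "cp K k (cp K p k) = k" using assoc[OF Cat kh p(1) kh] p(2) ek by simp
  have idA0: "idn K A0 \<in> hom K A0 A0" using id_hom Cat A0 by metis
  have kid: "cp K k (idn K A0) = k" using id_r[OF Cat kh] .
  have "\<exists>!u. u \<in> hom K A0 A0 \<and> cp K k u = k"
    using kuniv[OF kA] ak kh unfolding hom_def by auto
  hence "cp K p k = idn K A0" using pk kpk idA0 kid by blast
  thus ?thesis using p unfolding A0_def e_def x_def by auto
qed

lemma cov_e:
  assumes P: "preadditive K" and F: "biadditive_functor K E" and a: "a \<in> hom K A B" and a': "a' \<in> hom K B A"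
    and aa: "cp K a a' = idn K B" and G: "G \<in> Ob K" and xi: "\<xi> \<in> bifun.Ex E G A"
    and z: "cov E G a \<xi> = ezero E G B"
  shows "cov E G (ad K (idn K A) (ng K (cp K a' a))) \<xi> = \<xi>"
proof -
  have Cat: "category K" using P cat_of by metis
  have A: "A \<in> Ob K" and B: "B \<in> Ob K" using a hom_Ob Cat by metis+
  define x where "x = cp K a' a"
  have xh: "x \<in> hom K A A" unfolding x_def using comp_hom[OF Cat a a'] .
  have nx: "ng K x \<in> hom K A A" using ng_hom P xh by metis
  have idA: "idn K A \<in> hom K A A" using id_hom Cat A by metis
  have GA: "ab_group_on (bifun.Ex E G A) (eadd E G A) (ezero E G A) (eneg E G A)" using grp F G A by metis
  have cx: "cov E G x \<xi> = ezero E G A" unfolding x_def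
    using cov_comp[OF F G a a' xi] z cov_ezero[OF P F G a'] by simp
  have "eadd E G A (cov E G x \<xi>) (cov E G (ng K x) \<xi>) = ezero E G A"
    using cov_ad[OF F G xh nx xi] ad_ng[OF P xh] cov_zr_arrow[OF P F G A A xi] by simp
  hence cnx: "cov E G (ng K x) \<xi> = ezero E G A" using cx grp_zl[OF GA cov_in[OF F G nx xi]] by simp
  show ?thesis unfolding x_def[symmetric]
    using cov_ad[OF F G idA nx xi] cov_id[OF F G A xi] cnx grp_zr[OF GA xi] by simp
qed


lemma EExt_Ar: "(((C,A,\<alpha>),(D,B,\<beta>),(a,c)) \<in> Ar (EExt K E)) \<longleftrightarrow>
  (C \<in> Ob K \<and> A \<in> Ob K \<and> \<alpha> \<in> bifun.Ex E C A \<and> D \<in> Ob K \<and> B \<in> Ob K \<and> \<beta> \<in> bifun.Ex E D B \<and>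
   a \<in> hom K A B \<and> c \<in> hom K C D \<and> cov E C a \<alpha> = ctr E c B \<beta>)"
  by (simp add: EExt_def)

lemma EExt_form: "\<exists>C A \<alpha> D B \<beta> a c. f = ((C,A,\<alpha>),(D,B,\<beta>),(a,c))"
  by (metis prod.collapse)

lemma EExt_dm[simp]: "dm (EExt K E) (X,Y,m) = X" by (simp add: EExt_def)
lemma EExt_cd[simp]: "cd (EExt K E) (X,Y,m) = Y" by (simp add: EExt_def)
lemma EExt_cp[simp]: "cp (EExt K E) (Y',Z,(b,d)) (X,Y,(a,c)) = (X,Z,(cp K b a, cp K d c))" by (simp add: EExt_def)
lemma EExt_idn[simp]: "idn (EExt K E) (C,A,\<alpha>) = ((C,A,\<alpha>),(C,A,\<alpha>),(idn K A, idn K C))" by (simp add: EExt_def)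
lemma EExt_zr[simp]: "zr (EExt K E) (C,A,\<alpha>) (D,B,\<beta>) = ((C,A,\<alpha>),(D,B,\<beta>),(zr K A B, zr K C D))" by (simp add: EExt_def)

lemma kernelD:
  assumes "is_kernel K a k" "a \<in> hom K A B"
  shows "k \<in> hom K (dm K k) A" "cp K a k = zr K (dm K k) B"
    "\<And>t. t \<in> hom K H A \<Longrightarrow> cp K a t = zr K H B \<Longrightarrow> \<exists>!u. u \<in> hom K H (dm K k) \<and> cp K k u = t"
proof -
  have K: "k \<in> Ar K \<and> cd K k = dm K a \<and> cp K a k = zr K (dm K k) (cd K a) \<and>
    (\<forall>t\<in>Ar K. cd K t = dm K a \<and> cp K a t = zr K (dm K t) (cd K a) \<longrightarrow>
       (\<exists>!u. u \<in> hom K (dm K t) (dm K k) \<and> cp K k u = t))" using assms(1) unfolding is_kernel_def .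
  have a: "a \<in> Ar K" "dm K a = A" "cd K a = B" using homD[OF assms(2)] by blast+
  show "k \<in> hom K (dm K k) A" using K a(2) by (intro homI) simp_all
  show "cp K a k = zr K (dm K k) B" using K a(3) by simp
  fix t assume t: "t \<in> hom K H A" and at: "cp K a t = zr K H B"
  have t': "t \<in> Ar K" "dm K t = H" "cd K t = A" using homD[OF t] by blast+
  have "cd K t = dm K a \<and> cp K a t = zr K (dm K t) (cd K a)" using t' a at by simp
  hence "\<exists>!u. u \<in> hom K (dm K t) (dm K k) \<and> cp K k u = t" using K t'(1) by blast
  thus "\<exists>!u. u \<in> hom K H (dm K k) \<and> cp K k u = t" unfolding t'(2) .
qed

theorem proposition6p4:
  fixes n :: nat
    and K :: "('o, 'm) acat"
    and E :: "('o, 'm, 'e) bifun"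
    and s :: "'o \<Rightarrow> 'o \<Rightarrow> 'e \<Rightarrow> (nat \<Rightarrow> 'm) set"
  assumes "1 \<le> n"
    and "n_exangulated n K E s"
    and "weakly_idempotent_complete K"
  shows "weakly_idempotent_complete (EExt K E)"
  unfolding weakly_idempotent_complete_def
proof (intro allI impI)
  note NE = assms(2)
  note W = assms(3)
  fix r assume R: "is_retraction (EExt K E) r"
  note NE' = NE[unfolded n_exangulated_def]
  have AK: "additive K" by (rule conjunct1[OF conjunct2[OF NE']])
  have F: "biadditive_functor K E" by (rule conjunct1[OF conjunct2[OF conjunct2[OF NE']]])
  have P: "preadditive K" by (rule conjunct1[OF AK[unfolded additive_def]])
  have Cat: "category K" using P cat_of by metis
  obtain C A \<alpha> D B \<beta> a c where r: "r = ((C,A,\<alpha>),(D,B,\<beta>),(a,c))" using EExt_form by metis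
  have rA: "C \<in> Ob K" "A \<in> Ob K" "\<alpha> \<in> bifun.Ex E C A" "D \<in> Ob K" "B \<in> Ob K" "\<beta> \<in> bifun.Ex E D B"
    "a \<in> hom K A B" "c \<in> hom K C D" "cov E C a \<alpha> = ctr E c B \<beta>"
    using R unfolding is_retraction_def r EExt_Ar by auto
  obtain sc where sc: "sc \<in> hom (EExt K E) (D,B,\<beta>) (C,A,\<alpha>)" "cp (EExt K E) r sc = idn (EExt K E) (D,B,\<beta>)"
    using R unfolding is_retraction_def r by auto
  obtain X Y a' c' where scf: "sc = (X, Y, (a',c'))" by (metis prod.exhaust)
  have scX: "X = (D,B,\<beta>)" "Y = (C,A,\<alpha>)" using sc(1) unfolding scf hom_def by auto
  have scA: "a' \<in> hom K B A" "c' \<in> hom K D C"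
    using sc(1) unfolding scf scX by (auto simp: hom_def EExt_Ar)
  have aa: "cp K a a' = idn K B" and cc: "cp K c c' = idn K D"
    using sc(2) unfolding scf scX r by auto
  have reta: "is_retraction K a" using rA(7) scA(1) aa unfolding is_retraction_def hom_def by auto
  have retc: "is_retraction K c" using rA(8) scA(2) cc unfolding is_retraction_def hom_def by auto
  obtain ka where ka: "is_kernel K a ka" using W reta unfolding weakly_idempotent_complete_def by blast
  obtain kc where kc: "is_kernel K c kc" using W retc unfolding weakly_idempotent_complete_def by blast
  define A0 where "A0 = dm K ka"
  define C0 where "C0 = dm K kc"
  note kaD = kernelD[OF ka rA(7), folded A0_def]
  note kcD = kernelD[OF kc rA(8), folded C0_def]
  have A0: "A0 \<in> Ob K" using kaD(1) hom_Ob Cat by metis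
  have C0: "C0 \<in> Ob K" using kcD(1) hom_Ob Cat by metis
  obtain pa where pa: "pa \<in> hom K A A0" "cp K pa ka = idn K A0"
     "cp K ka pa = ad K (idn K A) (ng K (cp K a' a))"
    using split_kernel[OF P rA(7) scA(1) aa ka] unfolding A0_def by blast
  define \<xi> where "\<xi> = ctr E kc A \<alpha>"
  have xi: "\<xi> \<in> bifun.Ex E C0 A" unfolding \<xi>_def using ctr_in[OF F rA(2) kcD(1) rA(3)] .
  define \<alpha>0 where "\<alpha>0 = cov E C0 pa \<xi>"
  have a0: "\<alpha>0 \<in> bifun.Ex E C0 A0" unfolding \<alpha>0_def using cov_in[OF F C0 pa(1) xi] .
  have axi: "cov E C0 a \<xi> = ezero E C0 B"
  proof -
    have "cov E C0 a \<xi> = ctr E kc B (cov E C a \<alpha>)" unfolding \<xi>_def using bif[OF F rA(7) kcD(1) rA(3)] by simp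
    also have "\<dots> = ctr E kc B (ctr E c B \<beta>)" using rA(9) by simp
    also have "\<dots> = ctr E (cp K c kc) B \<beta>" using ctr_comp[OF F rA(5) kcD(1) rA(8) rA(6)] by simp
    also have "\<dots> = ezero E C0 B" using kcD(2) ctr_zr_arrow[OF P F C0 rA(4) rA(5) rA(6)] by simp
    finally show ?thesis .
  qed
  have kmor: "cov E C0 ka \<alpha>0 = ctr E kc A \<alpha>"
  proof -
    have "cov E C0 ka \<alpha>0 = cov E C0 (cp K ka pa) \<xi>" unfolding \<alpha>0_def using cov_comp[OF F C0 pa(1) kaD(1) xi] by simp
    also have "\<dots> = \<xi>" using pa(3) cov_e[OF P F rA(7) scA(1) aa C0 xi axi] by simp
    finally show ?thesis unfolding \<xi>_def .
  qed
  define \<kappa> where "\<kappa> = ((C0,A0,\<alpha>0),(C,A,\<alpha>),(ka,kc))"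
  have kAr: "\<kappa> \<in> Ar (EExt K E)" unfolding \<kappa>_def EExt_Ar
    using C0 A0 a0 rA kaD(1) kcD(1) kmor by auto
  have "is_kernel (EExt K E) r \<kappa>"
    unfolding is_kernel_def
  proof (intro conjI ballI impI)
    show "\<kappa> \<in> Ar (EExt K E)" by (rule kAr)
    show "cd (EExt K E) \<kappa> = dm (EExt K E) r" unfolding \<kappa>_def r by simp
    show "cp (EExt K E) r \<kappa> = zr (EExt K E) (dm (EExt K E) \<kappa>) (cd (EExt K E) r)"
      unfolding \<kappa>_def r using kaD(2) kcD(2) by simp
  next
    fix t assume t: "t \<in> Ar (EExt K E)"
      and tc: "cd (EExt K E) t = dm (EExt K E) r \<and> cp (EExt K E) r t = zr (EExt K E) (dm (EExt K E) t) (cd (EExt K E) r)"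
    obtain G H \<gamma> C' A' \<alpha>' u v where tf: "t = ((G,H,\<gamma>),(C',A',\<alpha>'),(u,v))" using EExt_form by metis
    have tX: "C' = C" "A' = A" "\<alpha>' = \<alpha>" using tc unfolding tf r by auto
    have tA: "G \<in> Ob K" "H \<in> Ob K" "\<gamma> \<in> bifun.Ex E G H" "u \<in> hom K H A" "v \<in> hom K G C"
        "cov E G u \<gamma> = ctr E v A \<alpha>"
      using t unfolding tf tX by (auto simp: EExt_Ar)
    have au: "cp K a u = zr K H B" and cv: "cp K c v = zr K G D" using tc unfolding tf tX r by auto
    obtain u' where u': "u' \<in> hom K H A0" "cp K ka u' = u"
      "\<And>w. w \<in> hom K H A0 \<Longrightarrow> cp K ka w = u \<Longrightarrow> w = u'"
      using kaD(3)[OF tA(4) au] by metis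
    obtain v' where v': "v' \<in> hom K G C0" "cp K kc v' = v"
      "\<And>w. w \<in> hom K G C0 \<Longrightarrow> cp K kc w = v \<Longrightarrow> w = v'"
      using kcD(3)[OF tA(5) cv] by metis
    have mor: "cov E G u' \<gamma> = ctr E v' A0 \<alpha>0"
    proof -
      have cu: "cov E G u' \<gamma> \<in> bifun.Ex E G A0" using cov_in[OF F tA(1) u'(1) tA(3)] .
      have "ctr E v' A0 \<alpha>0 = cov E G pa (ctr E v' A \<xi>)"
        unfolding \<alpha>0_def using bif[OF F pa(1) v'(1) xi] by simp
      also have "\<dots> = cov E G pa (ctr E v A \<alpha>)"
        unfolding \<xi>_def using ctr_comp[OF F rA(2) v'(1) kcD(1) rA(3)] v'(2) by simp
      also have "\<dots> = cov E G pa (cov E G u \<gamma>)" using tA(6) by simp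
      also have "\<dots> = cov E G pa (cov E G ka (cov E G u' \<gamma>))"
        using cov_comp[OF F tA(1) u'(1) kaD(1) tA(3)] u'(2) by simp
      also have "\<dots> = cov E G (cp K pa ka) (cov E G u' \<gamma>)"
        using cov_comp[OF F tA(1) kaD(1) pa(1) cu] by simp
      also have "\<dots> = cov E G u' \<gamma>" using pa(2) cov_id[OF F tA(1) A0 cu] by simp
      finally show ?thesis by simp
    qed
    define m where "m = ((G,H,\<gamma>),(C0,A0,\<alpha>0),(u',v'))"
    show "\<exists>!w. w \<in> hom (EExt K E) (dm (EExt K E) t) (dm (EExt K E) \<kappa>) \<and> cp (EExt K E) \<kappa> w = t"
    proof (rule ex1I[of _ m])
      show "m \<in> hom (EExt K E) (dm (EExt K E) t) (dm (EExt K E) \<kappa>) \<and> cp (EExt K E) \<kappa> m = t"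
      proof
        have "m \<in> Ar (EExt K E)" unfolding m_def EExt_Ar using tA(1,2,3) C0 A0 a0 u'(1) v'(1) mor by blast
        thus "m \<in> hom (EExt K E) (dm (EExt K E) t) (dm (EExt K E) \<kappa>)"
          unfolding hom_def m_def tf \<kappa>_def by simp
        show "cp (EExt K E) \<kappa> m = t" unfolding m_def \<kappa>_def tf tX using u'(2) v'(2) by simp
      qed
    next
      fix w assume w: "w \<in> hom (EExt K E) (dm (EExt K E) t) (dm (EExt K E) \<kappa>) \<and> cp (EExt K E) \<kappa> w = t"
      obtain X1 Y1 u1 v1 where wf: "w = (X1,Y1,(u1,v1))" by (metis prod.exhaust)
      have wX: "X1 = (G,H,\<gamma>)" "Y1 = (C0,A0,\<alpha>0)" using w unfolding wf hom_def tf \<kappa>_def by auto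
      have wA: "u1 \<in> hom K H A0" "v1 \<in> hom K G C0" using w unfolding wf wX by (auto simp: hom_def EExt_Ar)
      have wc: "cp K ka u1 = u" "cp K kc v1 = v" using w unfolding wf wX \<kappa>_def tf tX by auto
      show "w = m" unfolding wf wX m_def using u'(3)[OF wA(1) wc(1)] v'(3)[OF wA(2) wc(2)] by simp
    qed
  qed
  thus "\<exists>k. is_kernel (EExt K E) r k" by blast
qed

end
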